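(* The monoid $M := \langle x,y,z \mid (xy,\, yzx)\rangle$ is cancellative and BF, and $\rho(M) = 2$, but $M$ does not have accepted elasticity.
   Context: $M$ is the monoid with generators $x,y,z$ subject to the single relation $xy=yzx$; $\langle x,y,z\rangle$ is the free monoid on these letters. $|a|$ is word length; $a=_M b$ means equal images in $M$. $\mathsf{L}_M(a):=\{|b| : b\in\langle x,y,z\rangle,\ b=_M a\}$, $\mathcal{L}(M):=\{\mathsf{L}_M(a)\}$. $M$ is BF if every $\mathsf{L}_M(a)$ is finite; cancellative if $ab=ac$ or $ba=ca$ implies $b=c$. For $L\subseteq\mathbb{N}$, $\rho(L):=\sup(L\cap\mathbb{N}^+)/\min(L\cap\mathbb{N}^+)$ if $L\cap\mathbb{N}^+\ne\emptyset$, and $0$ otherwise; $\rho(M):=\sup\{\rho(L):L\in\mathcal{L}(M)\}$. $M$ has accepted elasticity if $\rho(M)=\rho(L)<\infty$ for some $L\in\mathcal{L}(M)$. *)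

theory Defs
  imports "HOL-Library.Extended_Real"
begin

datatype letter = X | Y | Z

inductive rel_step :: "letter list \<Rightarrow> letter list \<Rightarrow> bool" where
  fwd: "rel_step (u @ [X, Y] @ v) (u @ [Y, Z, X] @ v)"
| bwd: "rel_step (u @ [Y, Z, X] @ v) (u @ [X, Y] @ v)"

definition eqM :: "letter list \<Rightarrow> letter list \<Rightarrow> bool" where
  "eqM a b \<longleftrightarrow> rel_step\<^sup>*\<^sup>* a b"

definition LM :: "letter list \<Rightarrow> nat set" where
  "LM a = {length b | b. eqM b a}"

definition setsM :: "nat set set" where
  "setsM = {LM a | a. True}"

definition BF_M :: bool where
  "BF_M \<longleftrightarrow> (\<forall>a. finite (LM a))"

definition cancellative_M :: bool where
  "cancellative_M \<longleftrightarrow>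
     (\<forall>a b c. (eqM (a @ b) (a @ c) \<longrightarrow> eqM b c) \<and> (eqM (b @ a) (c @ a) \<longrightarrow> eqM b c))"

definition rho :: "nat set \<Rightarrow> ereal" where
  "rho L = (if L \<inter> {1..} \<noteq> {}
            then Sup ((\<lambda>n. ereal (real n)) ` (L \<inter> {1..})) / ereal (real (Inf (L \<inter> {1..})))
            else 0)"

definition rhoM :: ereal where
  "rhoM = Sup (rho ` setsM)"

definition accepted_elasticity_M :: bool where
  "accepted_elasticity_M \<longleftrightarrow> (\<exists>L\<in>setsM. rhoM = rho L \<and> rhoM < \<infinity>)"

end

theory Submission
  imports Defs
begin

definition red :: "letter list \<Rightarrow> letter list \<Rightarrow> bool" where
  "red a b \<longleftrightarrow> (\<exists>u v. a = u @ [Y,Z,X] @ v \<and> b = u @ [X,Y] @ v)"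

lemma red_rel: "red a b \<Longrightarrow> rel_step a b"
  unfolding red_def using rel_step.bwd by blast

lemma rel_sym: "rel_step a b \<Longrightarrow> rel_step b a"
proof (induction rule: rel_step.induct)
  case (fwd u v) show ?case by (rule rel_step.bwd)
next
  case (bwd u v) show ?case by (rule rel_step.fwd)
qed

lemma rel_red: "rel_step a b \<Longrightarrow> red a b \<or> red b a"
  by (induction rule: rel_step.induct) (auto simp: red_def)

lemma eqM_refl: "eqM a a" unfolding eqM_def by simp

lemma eqM_sym: "eqM a b \<Longrightarrow> eqM b a"
  unfolding eqM_def
proof (induction rule: rtranclp_induct)
  case base then show ?case by simp
next
  case (step y z)
  then show ?case using rel_sym
    by (meson converse_rtranclp_into_rtranclp)
qed

lemma eqM_trans: "eqM a b \<Longrightarrow> eqM b c \<Longrightarrow> eqM a c"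
  unfolding eqM_def by simp

lemma reds_eqM: "red\<^sup>*\<^sup>* a b \<Longrightarrow> eqM a b"
  unfolding eqM_def by (metis mono_rtranclp red_rel)

lemma eqM_step: "eqM a b \<Longrightarrow> rel_step b c \<Longrightarrow> eqM a c"
  unfolding eqM_def by simp

lemma rel_cong: "rel_step a b \<Longrightarrow> rel_step (p @ a @ q) (p @ b @ q)"
proof (induction rule: rel_step.induct)
  case (fwd u v)
  show ?case using rel_step.fwd[of "p @ u" "v @ q"] by simp
next
  case (bwd u v)
  show ?case using rel_step.bwd[of "p @ u" "v @ q"] by simp
qed

lemma eqM_cong: "eqM a b \<Longrightarrow> eqM (p @ a @ q) (p @ b @ q)"
  unfolding eqM_def
proof (induction rule: rtranclp_induct)
  case base then show ?case by simp
next
  case (step y z)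
  show ?case by (rule rtranclp.rtrancl_into_rtrancl[OF step(3) rel_cong[OF step(2)]])
qed


lemma key: assumes h1: "u1 @ us = u2" and h2: "[Y,Z,X] @ v1 = us @ [Y,Z,X] @ v2"
  shows "(u1 @ [X,Y] @ v1 = u2 @ [X,Y] @ v2) \<or>
      (\<exists>c. red (u1 @ [X,Y] @ v1) c \<and> red (u2 @ [X,Y] @ v2) c)"
proof (cases us)
  case Nil then show ?thesis using h1 h2 by simp
next
  case (Cons a1 r1)
  show ?thesis
  proof (cases r1)
    case Nil then show ?thesis using h1 h2 Cons by simp
  next
    case (Cons a2 r2)
    show ?thesis
    proof (cases r2)
      case Nil then show ?thesis using h1 h2 Cons \<open>us = a1 # r1\<close> by simp
    next
      case (Cons a3 m)
      then have us: "us = [Y,Z,X] @ m" and v1: "v1 = m @ [Y,Z,X] @ v2"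
        using h1 h2 \<open>us = a1 # r1\<close> \<open>r1 = a2 # r2\<close> by auto
      let ?c = "u1 @ [X,Y] @ m @ [X,Y] @ v2"
      have "red (u1 @ [X,Y] @ v1) ?c" unfolding red_def v1
        by (rule exI[of _ "u1 @ [X,Y] @ m"], rule exI[of _ v2]) simp
      moreover have "red (u2 @ [X,Y] @ v2) ?c" unfolding red_def h1[symmetric] us
        by (rule exI[of _ "u1"], rule exI[of _ "m @ [X,Y] @ v2"]) simp
      ultimately show ?thesis by blast
    qed
  qed
qed

lemma diamond:
  assumes "red w a" "red w b"
  shows "a = b \<or> (\<exists>c. red a c \<and> red b c)"
proof -
  obtain u1 v1 where e1: "w = u1 @ [Y,Z,X] @ v1" and e2: "a = u1 @ [X,Y] @ v1"
    using assms(1) unfolding red_def by blast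
  obtain u2 v2 where e3: "w = u2 @ [Y,Z,X] @ v2" and e4: "b = u2 @ [X,Y] @ v2"
    using assms(2) unfolding red_def by blast
  have eq: "u1 @ ([Y,Z,X] @ v1) = u2 @ ([Y,Z,X] @ v2)" by (rule trans[OF e1[symmetric] e3])
  from append_eq_append_conv2[THEN iffD1, OF eq] obtain us where
    "(u1 = u2 @ us \<and> us @ [Y,Z,X] @ v1 = [Y,Z,X] @ v2) \<or>
     (u1 @ us = u2 \<and> [Y,Z,X] @ v1 = us @ [Y,Z,X] @ v2)" by blast
  then show ?thesis
  proof
    assume h: "u1 = u2 @ us \<and> us @ [Y,Z,X] @ v1 = [Y,Z,X] @ v2"
    from key[OF conjunct1[OF h, symmetric] conjunct2[OF h, symmetric]] have "b = a \<or> (\<exists>c. red b c \<and> red a c)" unfolding e2 e4 .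
    then show ?thesis by blast
  next
    assume h: "u1 @ us = u2 \<and> [Y,Z,X] @ v1 = us @ [Y,Z,X] @ v2"
    from key[OF conjunct1[OF h] conjunct2[OF h]] show ?thesis unfolding e2 e4 .
  qed
qed
lemma strip:
  assumes "red\<^sup>*\<^sup>* w b" "red w a \<or> w = a"
  shows "\<exists>c. red\<^sup>*\<^sup>* a c \<and> (red b c \<or> b = c)"
  using assms(1)
proof (induction rule: rtranclp_induct)
  case base
  have "red\<^sup>*\<^sup>* a a" by simp
  then show ?case using assms(2) by blast
next
  case (step b' b)
  then obtain c' where c': "red\<^sup>*\<^sup>* a c'" "red b' c' \<or> b' = c'" by blast
  show ?case
  proof (cases "b' = c'")
    case True
    then have "red\<^sup>*\<^sup>* a b" using c'(1) step(2) by (metis rtranclp.rtrancl_into_rtrancl)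
    then show ?thesis by blast
  next
    case False
    then have r: "red b' c'" using c'(2) by simp
    from diamond[OF step(2) r] show ?thesis
    proof
      assume "b = c'" then show ?thesis using c'(1) by blast
    next
      assume "\<exists>c. red b c \<and> red c' c"
      then obtain e where e: "red b e" "red c' e" by blast
      have "red\<^sup>*\<^sup>* a e" using c'(1) e(2) by (rule rtranclp.rtrancl_into_rtrancl)
      then show ?thesis using e(1) by blast
    qed
  qed
qed

lemma confl:
  assumes "red\<^sup>*\<^sup>* w a" "red\<^sup>*\<^sup>* w b"
  shows "\<exists>c. red\<^sup>*\<^sup>* a c \<and> red\<^sup>*\<^sup>* b c"
  using assms(1)
proof (induction rule: rtranclp_induct)
  case base then show ?case using assms(2) by blast
next
  case (step a' a)
  then obtain c' where c': "red\<^sup>*\<^sup>* a' c'" "red\<^sup>*\<^sup>* b c'" by blast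
  have "red a' a \<or> a' = a" using step(2) by simp
  from strip[OF c'(1) this] obtain d where d: "red\<^sup>*\<^sup>* a d" "red c' d \<or> c' = d" by blast
  have "red\<^sup>*\<^sup>* b d"
  proof (cases "c' = d")
    case True then show ?thesis using c'(2) by simp
  next
    case False then have "red c' d" using d(2) by simp
    then show ?thesis using c'(2) by (metis rtranclp.rtrancl_into_rtrancl)
  qed
  then show ?case using d(1) by blast
qed

lemma church_rosser:
  assumes "eqM a b" shows "\<exists>c. red\<^sup>*\<^sup>* a c \<and> red\<^sup>*\<^sup>* b c"
  using assms unfolding eqM_def
proof (induction rule: rtranclp_induct)
  case base then show ?case by blast
next
  case (step b' b)
  then obtain c' where c': "red\<^sup>*\<^sup>* a c'" "red\<^sup>*\<^sup>* b' c'" by blast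
  from rel_red[OF step(2)] show ?case
  proof
    assume "red b' b"
    then obtain d where "red\<^sup>*\<^sup>* c' d" "red\<^sup>*\<^sup>* b d"
      using confl[OF c'(2), of b] by blast
    then show ?case using c'(1) rtranclp_trans[of red a c'] by blast
  next
    assume "red b b'"
    then have "red\<^sup>*\<^sup>* b c'" using c'(2) by (rule converse_rtranclp_into_rtranclp)
    then show ?case using c'(1) by blast
  qed
qed


lemma red_cons_nonY:
  assumes "red (l # b) w" "l \<noteq> Y"
  shows "\<exists>w'. w = l # w' \<and> red b w'"
proof -
  obtain u v where e1: "l # b = u @ [Y,Z,X] @ v" and e2: "w = u @ [X,Y] @ v"
    using assms(1) unfolding red_def by blast
  show ?thesis
  proof (cases u)
    case Nil then show ?thesis using e1 assms(2) by simp
  next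
    case (Cons c u')
    then have "c = l" "b = u' @ [Y,Z,X] @ v" using e1 by simp_all
    have "red b (u' @ [X,Y] @ v)" unfolding red_def using \<open>b = u' @ [Y,Z,X] @ v\<close> by blast
    moreover have "w = l # (u' @ [X,Y] @ v)" using e2 Cons \<open>c = l\<close> by simp
    ultimately show ?thesis by blast
  qed
qed

lemma reds_cons_nonY:
  assumes "red\<^sup>*\<^sup>* (l # b) n" "l \<noteq> Y"
  shows "\<exists>n'. n = l # n' \<and> red\<^sup>*\<^sup>* b n'"
  using assms(1)
proof (induction rule: rtranclp_induct)
  case base then show ?case by blast
next
  case (step m n)
  then obtain m' where m': "m = l # m'" "red\<^sup>*\<^sup>* b m'" by blast
  from red_cons_nonY[of l m' n] step(2) m'(1) assms(2) obtain w' where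
    "n = l # w'" "red m' w'" by blast
  moreover have "red\<^sup>*\<^sup>* b w'" using m'(2) \<open>red m' w'\<close> by (rule rtranclp.rtrancl_into_rtrancl)
  ultimately show ?case by blast
qed

definition zx :: "nat \<Rightarrow> letter list" where
  "zx j = concat (replicate j [Z,X])"

lemma zx_0[simp]: "zx 0 = []" by (simp add: zx_def)

lemma zx_Suc: "zx (Suc j) = Z # X # zx j" by (simp add: zx_def)

lemma zx_Suc': "zx (Suc j) = zx j @ [Z,X]"
  by (induction j) (simp_all add: zx_Suc)

lemma length_zx[simp]: "length (zx j) = 2 * j"
  by (induction j) (simp_all add: zx_Suc)

lemma rep_X_suffix: "replicate j X = u @ us \<Longrightarrow> c \<in> set us \<Longrightarrow> c = X"
proof -
  assume "replicate j X = u @ us" "c \<in> set us"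
  then have "c \<in> set (replicate j X)" by simp
  then show "c = X" by (simp split: if_splits)
qed

lemma rep_X_Cons: "replicate j X @ X # r = X # replicate j X @ r"
  by (induction j) simp_all

lemma red_Y:
  assumes "red (replicate j X @ Y # n) w"
  shows "(\<exists>v. n = Z # X # v \<and> w = replicate (Suc j) X @ Y # v) \<or>
         (\<exists>u' v. n = u' @ [Y,Z,X] @ v \<and> w = replicate j X @ Y # (u' @ [X,Y] @ v))"
proof -
  obtain u v where e1: "replicate j X @ (Y # n) = u @ ([Y,Z,X] @ v)" and e2: "w = u @ [X,Y] @ v"
    using assms unfolding red_def by blast
  from append_eq_append_conv2[THEN iffD1, OF e1] obtain us where
    h: "(replicate j X = u @ us \<and> us @ Y # n = [Y,Z,X] @ v) \<or>
     (replicate j X @ us = u \<and> Y # n = us @ [Y,Z,X] @ v)" by blast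
  show ?thesis
  proof (cases us)
    case Nil
    then have h': "(replicate j X = u \<and> Y # n = [Y,Z,X] @ v) \<or>
     (replicate j X = u \<and> Y # n = [Y,Z,X] @ v)" using h by (simp only: append_Nil append_Nil2)
    then have u: "u = replicate j X" and "Y # n = [Y,Z,X] @ v" by blast+
    then have n: "n = Z # X # v" by simp
    have "w = replicate j X @ X # Y # v" using e2 u by simp
    also have "\<dots> = replicate (Suc j) X @ Y # v" by (simp only: rep_X_Cons replicate_Suc append_Cons)
    finally show ?thesis using n by blast
  next
    case (Cons c us')
    show ?thesis
    proof (cases "replicate j X = u @ us \<and> us @ Y # n = [Y,Z,X] @ v")
      case True
      then have "c \<in> set (replicate j X)" using Cons by (simp only: set_append) simp
      then have "c = X" by (simp split: if_splits)
      moreover have "c = Y" using True Cons by (simp only: append_Cons) simp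
      ultimately show ?thesis by simp
    next
      case False
      then have h2: "replicate j X @ us = u" "Y # n = us @ [Y,Z,X] @ v" using h by blast+
      then have "Y # n = c # (us' @ [Y,Z,X] @ v)" using Cons by simp
      then have "c = Y" "n = us' @ [Y,Z,X] @ v" by simp_all
      then have "w = replicate j X @ Y # (us' @ [X,Y] @ v)" using e2 h2(1) Cons by simp
      then show ?thesis using \<open>n = us' @ [Y,Z,X] @ v\<close> by blast
    qed
  qed
qed

lemma reds_Y:
  assumes "red\<^sup>*\<^sup>* (Y # b) n"
  shows "\<exists>j n'. n = replicate j X @ Y # n' \<and> eqM b (zx j @ n')"
  using assms
proof (induction rule: rtranclp_induct)
  case base
  have "Y # b = replicate 0 X @ Y # b \<and> eqM b (zx 0 @ b)" by (simp add: eqM_refl)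
  then show ?case by blast
next
  case (step m n)
  then obtain j n' where m: "m = replicate j X @ Y # n'" and eb: "eqM b (zx j @ n')" by blast
  from red_Y[of j n' n, OF step(2)[unfolded m]] show ?case
  proof (elim disjE exE conjE)
    fix v assume n': "n' = Z # X # v" and nn: "n = replicate (Suc j) X @ Y # v"
    have "zx j @ n' = zx (Suc j) @ v" using n' by (simp add: zx_Suc')
    then show ?case using eb nn by metis
  next
    fix u' v assume n': "n' = u' @ [Y,Z,X] @ v" and nn: "n = replicate j X @ Y # (u' @ [X,Y] @ v)"
    have "rel_step ((zx j @ u') @ [Y,Z,X] @ v) ((zx j @ u') @ [X,Y] @ v)" by (rule rel_step.bwd)
    then have "rel_step (zx j @ n') (zx j @ (u' @ [X,Y] @ v))" using n' by simp
    then have "eqM b (zx j @ (u' @ [X,Y] @ v))" by (rule eqM_step[OF eb])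
    then show ?case using nn by blast
  qed
qed

lemma rep_Y_inj: "replicate j X @ Y # p = replicate k X @ Y # q \<Longrightarrow> j = k \<and> p = q"
proof (induction j arbitrary: k)
  case 0 then show ?case by (cases k) auto
next
  case (Suc j) then show ?case by (cases k) auto
qed

lemma cancel1:
  assumes "eqM (l # b) (l # c)" shows "eqM b c"
proof -
  obtain n where n: "red\<^sup>*\<^sup>* (l # b) n" "red\<^sup>*\<^sup>* (l # c) n"
    using church_rosser[OF assms] by blast
  show ?thesis
  proof (cases "l = Y")
    case True
    obtain j1 n1 where 1: "n = replicate j1 X @ Y # n1" "eqM b (zx j1 @ n1)"
      using reds_Y n(1) True by blast
    obtain j2 n2 where 2: "n = replicate j2 X @ Y # n2" "eqM c (zx j2 @ n2)"
      using reds_Y n(2) True by blast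
    have "j1 = j2 \<and> n1 = n2" using 1(1) 2(1) by (intro rep_Y_inj) simp
    then have "eqM c (zx j1 @ n1)" using 2(2) by simp
    then show ?thesis using eqM_trans[OF 1(2) eqM_sym] by blast
  next
    case False
    obtain n1 where 1: "n = l # n1" "red\<^sup>*\<^sup>* b n1" using reds_cons_nonY n(1) False by blast
    obtain n2 where 2: "n = l # n2" "red\<^sup>*\<^sup>* c n2" using reds_cons_nonY n(2) False by blast
    have "n1 = n2" using 1(1) 2(1) by simp
    then have "eqM c n1" using reds_eqM[OF 2(2)] by simp
    then show ?thesis using eqM_trans[OF reds_eqM[OF 1(2)] eqM_sym] by blast
  qed
qed

lemma cancel_left: "eqM (a @ b) (a @ c) \<Longrightarrow> eqM b c"
proof (induction a)
  case Nil then show ?case by simp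
next
  case (Cons l a) then show ?case using cancel1[of l "a @ b" "a @ c"] by simp
qed

fun sw :: "letter \<Rightarrow> letter" where
  "sw X = Y" | "sw Y = X" | "sw Z = Z"

definition sig :: "letter list \<Rightarrow> letter list" where
  "sig w = map sw (rev w)"

lemma sw_sw[simp]: "sw (sw c) = c" by (cases c) auto

lemma sig_sig[simp]: "sig (sig w) = w" by (simp add: sig_def rev_map comp_def)

lemma sig_append[simp]: "sig (a @ b) = sig b @ sig a" by (simp add: sig_def)

lemma rel_sig: "rel_step a b \<Longrightarrow> rel_step (sig a) (sig b)"
proof (induction rule: rel_step.induct)
  case (fwd u v)
  show ?case using rel_step.fwd[of "sig v" "sig u"] by (simp add: sig_def)
next
  case (bwd u v)
  show ?case using rel_step.bwd[of "sig v" "sig u"] by (simp add: sig_def)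
qed

lemma eqM_sig: "eqM a b \<Longrightarrow> eqM (sig a) (sig b)"
  unfolding eqM_def
proof (induction rule: rtranclp_induct)
  case base then show ?case by simp
next
  case (step y z)
  show ?case by (rule rtranclp.rtrancl_into_rtrancl[OF step(3) rel_sig[OF step(2)]])
qed

lemma cancel_right: "eqM (b @ a) (c @ a) \<Longrightarrow> eqM b c"
proof -
  assume "eqM (b @ a) (c @ a)"
  then have "eqM (sig a @ sig b) (sig a @ sig c)" using eqM_sig by fastforce
  then have "eqM (sig b) (sig c)" by (rule cancel_left)
  then show "eqM b c" using eqM_sig by fastforce
qed

lemma cancellative: cancellative_M
  unfolding cancellative_M_def using cancel_left cancel_right by blast


fun hh :: "letter \<Rightarrow> letter list \<Rightarrow> nat" where
  "hh c (Z # b # r) = (if c \<noteq> Z \<and> b \<noteq> Z then 1 else 0)"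
| "hh c w = 0"

primrec sc :: "letter list \<Rightarrow> nat" where
  "sc [] = 0"
| "sc (c # w) = hh c w + sc w"

lemma hh_Z[simp]: "hh Z w = 0"
  by (cases "(Z, w)" rule: hh.cases) auto

lemma hh_le1: "hh c w \<le> 1"
  by (cases "(c, w)" rule: hh.cases) auto

lemma hh_nonZ_first: "d \<noteq> Z \<Longrightarrow> hh c (d # r) = 0"
  by (cases d) auto

lemma hh_XY: "hh X v = hh Y v"
proof (cases v)
  case Nil then show ?thesis by simp
next
  case (Cons a r) then show ?thesis by (cases a; cases r) auto
qed

lemma hh_eq: "hh c (u @ Y # Z # X # v) = hh c (u @ X # Y # v)"
proof (cases u)
  case Nil then show ?thesis by simp
next
  case (Cons d u')
  then show ?thesis by (cases u'; cases d) auto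
qed

lemma sc_step: "sc (u @ Y # Z # X # v) = Suc (sc (u @ X # Y # v))"
proof (induction u)
  case Nil then show ?case by (simp add: hh_XY)
next
  case (Cons c u) then show ?case by (simp add: hh_eq)
qed

lemma rel_len: "rel_step a b \<Longrightarrow> length a + sc b = length b + sc a"
  by (induction rule: rel_step.induct) (simp_all add: sc_step)

lemma eqM_len: "eqM a b \<Longrightarrow> length a + sc b = length b + sc a"
  unfolding eqM_def
proof (induction rule: rtranclp_induct)
  case base then show ?case by simp
next
  case (step y z)
  then show ?case using rel_len[OF step(2)] by simp
qed

lemma sc_bound: "w \<noteq> [] \<Longrightarrow> 2 * sc w < length w"
proof (induction w rule: induct_list012)
  case 1 then show ?case by simp
next
  case (2 x) then show ?case by simp
next
  case (3 x y zs)
  show ?case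
  proof (cases "y = Z \<and> zs \<noteq> []")
    case True
    then have "2 * sc zs < length zs" using 3 by blast
    moreover have "sc (x # y # zs) \<le> 1 + sc zs" using True hh_le1[of x "y # zs"] by simp
    ultimately show ?thesis by simp
  next
    case False
    then have "hh x (y # zs) = 0"
    proof (cases "y = Z")
      case True then have "zs = []" using False by simp
      then show ?thesis using True by simp
    next
      case False then show ?thesis by (rule hh_nonZ_first)
    qed
    then show ?thesis using 3 by simp
  qed
qed

lemma len_bound: "eqM b c \<Longrightarrow> b \<noteq> [] \<Longrightarrow> length b < 2 * length c"
  using eqM_len[of b c] sc_bound[of b] by simp

lemma ex_eq: "eqM (replicate n X @ [Y]) (Y # zx n)"
proof (induction n)
  case 0 then show ?case by (simp add: eqM_refl)
next
  case (Suc n)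
  have "eqM ([X] @ (replicate n X @ [Y]) @ []) ([X] @ (Y # zx n) @ [])"
    by (rule eqM_cong[OF Suc])
  then have "eqM (replicate (Suc n) X @ [Y]) (X # Y # zx n)" by simp
  moreover have "rel_step (X # Y # zx n) (Y # zx (Suc n))"
    using rel_step.fwd[of "[]" "zx n"] by (simp add: zx_Suc)
  ultimately show ?case by (rule eqM_step)
qed

lemma LM_bound: "k \<in> LM a \<Longrightarrow> k \<le> 2 * length a"
proof -
  assume "k \<in> LM a"
  then obtain b where b: "k = length b" "eqM b a" unfolding LM_def by blast
  show "k \<le> 2 * length a"
  proof (cases "b = []")
    case True then show ?thesis using b by simp
  next
    case False then show ?thesis using len_bound[OF b(2) False] b(1) by simp
  qed
qed

lemma BF: BF_M
  unfolding BF_M_def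
proof
  fix a
  have "LM a \<subseteq> {..2 * length a}" using LM_bound by auto
  then show "finite (LM a)" by (rule finite_subset) simp
qed

lemma rho_val:
  assumes "finite (L \<inter> {1..})" "L \<inter> {1..} \<noteq> {}"
  shows "rho L = ereal (real (Max (L \<inter> {1..})) / real (Min (L \<inter> {1..})))"
proof -
  let ?S = "L \<inter> {1..}"
  have s1: "Sup ((\<lambda>n. ereal (real n)) ` ?S) \<le> ereal (real (Max ?S))"
    by (rule Sup_least) (use assms in auto)
  have s2: "ereal (real (Max ?S)) \<le> Sup ((\<lambda>n. ereal (real n)) ` ?S)"
    by (rule Sup_upper) (use assms Max_in in blast)
  have i: "Inf ?S = Min ?S" using assms by (rule cInf_eq_Min)
  have "Min ?S \<in> ?S" using assms by (rule Min_in)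
  then have "Min ?S \<ge> 1" by simp
  then show ?thesis unfolding rho_def using assms(2) antisym[OF s1 s2] i by simp
qed

lemma rho_lt2: "rho (LM a) < 2"
proof (cases "LM a \<inter> {1..} = {}")
  case True then show ?thesis by (simp add: rho_def)
next
  case False
  let ?S = "LM a \<inter> {1..}"
  have fin: "finite ?S" using BF unfolding BF_M_def by simp
  have "Max ?S \<in> ?S" using fin False by (rule Max_in)
  then obtain b where b: "Max ?S = length b" "eqM b a" "length b \<ge> 1" unfolding LM_def by auto
  have "Min ?S \<in> ?S" using fin False by (rule Min_in)
  then obtain c where c: "Min ?S = length c" "eqM c a" unfolding LM_def by auto
  have "eqM b c" using eqM_trans[OF b(2) eqM_sym[OF c(2)]] .
  moreover have "b \<noteq> []" using b(3) by auto
  ultimately have lt: "length b < 2 * length c" by (rule len_bound)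
  then have "real (length b) / real (length c) < 2"
    by (simp add: divide_less_eq)
  then show ?thesis using rho_val[OF fin False] b(1) c(1) by simp
qed

lemma rho_ex: "ereal (2 - 1 / (real n + 1)) \<le> rho (LM (replicate n X @ [Y]))"
proof -
  let ?w = "replicate n X @ [Y]"
  let ?S = "LM ?w \<inter> {1..}"
  have fin: "finite ?S" using BF unfolding BF_M_def by simp
  have "n + 1 \<in> ?S" unfolding LM_def using eqM_refl[of ?w] by force
  moreover have "2 * n + 1 \<in> ?S" unfolding LM_def using eqM_sym[OF ex_eq[of n]]
    by (auto intro!: exI[of _ "Y # zx n"])
  ultimately have ne: "?S \<noteq> {}" and mx: "2 * n + 1 \<le> Max ?S" and mn: "Min ?S \<le> n + 1"
    using fin by auto
  have "Min ?S \<in> ?S" using fin ne by (rule Min_in)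
  then have mn1: "Min ?S \<ge> 1" by simp
  have "2 - 1 / (real n + 1) = real (2 * n + 1) / real (n + 1)" by (simp add: field_simps)
  also have "\<dots> \<le> real (Max ?S) / real (Min ?S)"
    by (rule frac_le) (use mx mn mn1 in auto)
  finally show ?thesis using rho_val[OF fin ne] by simp
qed

lemma rhoM_le: "rhoM \<le> 2"
  unfolding rhoM_def
proof (rule Sup_least)
  fix x assume "x \<in> rho ` setsM"
  then obtain a where "x = rho (LM a)" unfolding setsM_def by blast
  then show "x \<le> 2" using rho_lt2[of a] by (simp only: less_imp_le)
qed

lemma rhoM_ge: "ereal (2 - 1 / (real n + 1)) \<le> rhoM"
proof -
  have "rho (LM (replicate n X @ [Y])) \<in> rho ` setsM" unfolding setsM_def by blast
  then show ?thesis unfolding rhoM_def using rho_ex by (rule Sup_upper2)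
qed

lemma rhoM_eq: "rhoM = 2"
proof (rule ccontr)
  assume ne: "rhoM \<noteq> 2"
  have ge1: "ereal 1 \<le> rhoM" using rhoM_ge[of 0] by simp
  have n1: "rhoM \<noteq> -\<infinity>"
  proof
    assume h: "rhoM = -\<infinity>"
    from ge1 have "ereal 1 \<le> -\<infinity>" unfolding h .
    then show False by simp
  qed
  have n2: "rhoM \<noteq> \<infinity>"
  proof
    assume h: "rhoM = \<infinity>"
    from rhoM_le have "\<infinity> \<le> (2::ereal)" unfolding h .
    then show False by simp
  qed
  obtain r where r: "rhoM = ereal r" using n1 n2 by (cases rhoM) auto
  have "ereal r \<le> 2" "ereal r \<noteq> 2" using ne rhoM_le unfolding r by auto
  then have "r < 2" by simp
  then obtain n where n: "inverse (real (Suc n)) < 2 - r" using reals_Archimedean[of "2 - r"] by auto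
  have "ereal (2 - 1 / (real n + 1)) \<le> ereal r" using rhoM_ge[of n] unfolding r .
  then have "2 - 1 / (real n + 1) \<le> r" by simp
  moreover have "inverse (real (Suc n)) = 1 / (real n + 1)" by (simp add: inverse_eq_divide)
  ultimately show False using n by simp
qed

theorem proposition6p3:
  shows "cancellative_M \<and> BF_M \<and> rhoM = 2 \<and> \<not> accepted_elasticity_M"
proof (intro conjI)
  show cancellative_M by (rule cancellative)
  show BF_M by (rule BF)
  show "rhoM = 2" by (rule rhoM_eq)
  show "\<not> accepted_elasticity_M"
  proof
    assume accepted_elasticity_M
    then obtain L where "L \<in> setsM" "rhoM = rho L" unfolding accepted_elasticity_M_def by blast
    then obtain a where "L = LM a" "rho L = 2" using rhoM_eq unfolding setsM_def by auto
    then show False using rho_lt2[of a] by simp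
  qed
qed

end
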